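(* Let $\Sigma=(X,\mathcal{S},\phi)$ be a forward complete dynamical system. Let $t_1>0$, $G_0>0$, and let $\beta$ be a function of class $\mathcal{K}_\infty$ such that $\limsup_{r\downarrow 0}\frac{\beta(r)}{r}<+\infty$ and $$\|\phi(t,x,\sigma)\|\le G_0\,\beta(\|x\|)\quad \text{for all } t\in[0,t_1],\ x\in X,\ \sigma\in\mathcal{S}.$$ Then the following statements are equivalent: (i) $\Sigma$ is ULES; (ii) for every $p>0$ there exist a nondecreasing function $k:\mathbb{R}_+\to\mathbb{R}_+$ and $R>0$ such that $$\int_0^{+\infty}\|\phi(t,x,\sigma)\|^p\,dt\le k(\|x\|)^p\|x\|^p\quad\text{for all } x\in B_X(0,R),\ \sigma\in\mathcal{S};$$ (iii) there exist $p>0$, a nondecreasing function $k:\mathbb{R}_+\to\mathbb{R}_+$, and $R>0$ such that the inequality in (ii) holds for all $x\in B_X(0,R)$ and $\sigma\in\mathcal{S}$.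
   Context: $(X,\|\cdot\|)$ is a Banach space and $B_X(x,r)$ denotes the closed ball of center $x$ and radius $r$. A function $\alpha:\mathbb{R}_+\to\mathbb{R}_+$ is of class $\mathcal{K}$ if it is continuous, increasing and $\alpha(0)=0$; of class $\mathcal{K}_\infty$ if moreover unbounded. Let $\mathcal{Q}$ be a nonempty set and $\mathcal{S}$ a set of functions $\sigma:\mathbb{R}_+\to\mathcal{Q}$ which is closed by time-shift (for $\sigma\in\mathcal{S}$, $\tau\ge0$, the function $\mathbb{T}_\tau\sigma:s\mapsto\sigma(\tau+s)$ is in $\mathcal{S}$) and closed by concatenation (for $\sigma_1,\sigma_2\in\mathcal{S}$, $\tau>0$, the function equal to $\sigma_1$ on $[0,\tau]$ and with $\sigma(\tau+t)=\sigma_2(t)$ for $t>0$ is in $\mathcal{S}$). A triple $\Sigma=(X,\mathcal{S},\phi)$ with $\phi:\mathbb{R}_+\times X\times\mathcal{S}\to X$ is a forward complete dynamical system if: (i) $\phi(0,x,\sigma)=x$; (ii) if $\tilde\sigma=\sigma$ on $[0,t]$ then $\phi(t,x,\tilde\sigma)=\phi(t,x,\sigma)$; (iii) $t\mapsto\phi(t,x,\sigma)$ is continuous; (iv) $\phi(\tau,\phi(t,x,\sigma),\mathbb{T}_t\sigma)=\phi(t+\tau,x,\sigma)$ for all $t,\tau\ge0$, $x\in X$, $\sigma\in\mathcal{S}$. $\Sigma$ is uniformly locally exponentially stable at the origin (ULES) if there exist $R,M,\lambda>0$ such that $\|\phi(t,x,\sigma)\|\le Me^{-\lambda t}\|x\|$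 for all $t\ge0$, $x\in B_X(0,R)$, $\sigma\in\mathcal{S}$. *)

theory Defs
  imports "HOL-Analysis.Analysis"
begin

definition tshift :: "real \<Rightarrow> (real \<Rightarrow> 'q) \<Rightarrow> (real \<Rightarrow> 'q)" where
  "tshift \<tau> \<sigma> = (\<lambda>s. \<sigma> (\<tau> + s))"

definition concat_sig :: "(real \<Rightarrow> 'q) \<Rightarrow> real \<Rightarrow> (real \<Rightarrow> 'q) \<Rightarrow> (real \<Rightarrow> 'q)" where
  "concat_sig \<sigma>1 \<tau> \<sigma>2 = (\<lambda>t. if t \<le> \<tau> then \<sigma>1 t else \<sigma>2 (t - \<tau>))"

definition shift_closed :: "(real \<Rightarrow> 'q) set \<Rightarrow> bool" where
  "shift_closed S \<longleftrightarrow> (\<forall>\<sigma>\<in>S. \<forall>\<tau>\<ge>0. tshift \<tau> \<sigma> \<in> S)"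

definition concat_closed :: "(real \<Rightarrow> 'q) set \<Rightarrow> bool" where
  "concat_closed S \<longleftrightarrow> (\<forall>\<sigma>1\<in>S. \<forall>\<sigma>2\<in>S. \<forall>\<tau>>0. concat_sig \<sigma>1 \<tau> \<sigma>2 \<in> S)"

definition fc_dyn_sys ::
  "(real \<Rightarrow> 'q) set \<Rightarrow> (real \<Rightarrow> 'x::banach \<Rightarrow> (real \<Rightarrow> 'q) \<Rightarrow> 'x) \<Rightarrow> bool" where
  "fc_dyn_sys S \<phi> \<longleftrightarrow>
     shift_closed S \<and> concat_closed S \<and>
     (\<forall>x. \<forall>\<sigma>\<in>S. \<phi> 0 x \<sigma> = x) \<and>
     (\<forall>t\<ge>0. \<forall>x. \<forall>\<sigma>\<in>S. \<forall>\<sigma>'\<in>S. (\<forall>s\<in>{0..t}. \<sigma>' s = \<sigma> s) \<longrightarrow> \<phi> t x \<sigma>' = \<phi> t x \<sigma>) \<and>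
     (\<forall>x. \<forall>\<sigma>\<in>S. continuous_on {0..} (\<lambda>t. \<phi> t x \<sigma>)) \<and>
     (\<forall>t\<ge>0. \<forall>\<tau>\<ge>0. \<forall>x. \<forall>\<sigma>\<in>S. \<phi> \<tau> (\<phi> t x \<sigma>) (tshift t \<sigma>) = \<phi> (t + \<tau>) x \<sigma>)"

definition class_K :: "(real \<Rightarrow> real) \<Rightarrow> bool" where
  "class_K \<alpha> \<longleftrightarrow> continuous_on {0..} \<alpha> \<and> strict_mono_on {0..} \<alpha> \<and> \<alpha> 0 = 0"

definition class_Kinf :: "(real \<Rightarrow> real) \<Rightarrow> bool" where
  "class_Kinf \<alpha> \<longleftrightarrow> class_K \<alpha> \<and> (\<forall>M. \<exists>r\<ge>0. \<alpha> r > M)"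

definition ULES ::
  "(real \<Rightarrow> 'q) set \<Rightarrow> (real \<Rightarrow> 'x::banach \<Rightarrow> (real \<Rightarrow> 'q) \<Rightarrow> 'x) \<Rightarrow> bool" where
  "ULES S \<phi> \<longleftrightarrow> (\<exists>R>0. \<exists>M>0. \<exists>lam>0. \<forall>t\<ge>0. \<forall>x\<in>cball 0 R. \<forall>\<sigma>\<in>S.
      norm (\<phi> t x \<sigma>) \<le> M * exp (- lam * t) * norm x)"

text \<open>The integral estimate of items (ii)/(iii), as a (possibly infinite) Lebesgue integral of a nonnegative function.\<close>
definition int_estimate ::
  "(real \<Rightarrow> 'q) set \<Rightarrow> (real \<Rightarrow> 'x::banach \<Rightarrow> (real \<Rightarrow> 'q) \<Rightarrow> 'x) \<Rightarrow> real \<Rightarrow> (real \<Rightarrow> real) \<Rightarrow> real \<Rightarrow> bool" where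
  "int_estimate S \<phi> p k R \<longleftrightarrow> (\<forall>x\<in>cball 0 R. \<forall>\<sigma>\<in>S.
      (\<integral>\<^sup>+ t \<in> {0..}. ennreal (norm (\<phi> t x \<sigma>) powr p) \<partial>lborel)
        \<le> ennreal (k (norm x) powr p * norm x powr p))"

definition nondecr_nonneg :: "(real \<Rightarrow> real) \<Rightarrow> bool" where
  "nondecr_nonneg k \<longleftrightarrow> mono_on {0..} k \<and> (\<forall>r\<ge>0. k r \<ge> 0)"

end

theory Submission
  imports Defs
begin

lemma exp_int:
  assumes "a > 0"
  shows "(\<integral>\<^sup>+ t \<in> {0..}. ennreal (exp (- a * t)) \<partial>lborel) = ennreal (1 / a)"
proof -
  have "((\<lambda>x::real. exp (-a*x)) has_integral exp (-a*0)/a) {0..}"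
    using has_integral_exp_minus_to_infinity[OF assms] .
  then have "integral\<^sup>N lborel (\<lambda>x. ennreal (exp (-a*x)) * indicator {0..} x) = ennreal (exp (-a*0)/a)"
    by (intro nn_integral_has_integral_lebesgue') auto
  then show ?thesis by simp
qed

lemma powr_cancel_le:
  fixes x y p :: real
  assumes "p > 0" "x \<ge> 0" "y \<ge> 0" "x powr p \<le> y powr p"
  shows "x \<le> y"
proof -
  have "(x powr p) powr (1/p) \<le> (y powr p) powr (1/p)"
    by (rule powr_mono2) (use assms in auto)
  moreover have "(x powr p) powr (1/p) = x" using assms by (simp add: powr_powr)
  moreover have "(y powr p) powr (1/p) = y" using assms by (simp add: powr_powr)
  ultimately show ?thesis by linarith
qed

lemma int_lower:
  fixes g :: "real \<Rightarrow> real"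
  assumes p: "p > 0" and a: "a \<ge> 0" and d: "d \<ge> 0" and c: "c \<ge> 0" and C: "C > 0" and B0: "B0 \<ge> 0"
    and h: "\<And>s. s \<in> {a..a+d} \<Longrightarrow> c \<le> C * g s" and gnn: "\<And>s. g s \<ge> 0"
    and I: "(\<integral>\<^sup>+ s \<in> {0..}. ennreal (g s powr p) \<partial>lborel) \<le> ennreal (B0 powr p)"
  shows "d powr (1/p) * c \<le> C * B0"
proof -
  have "ennreal ((c/C) powr p) * emeasure lborel {a..a+d} = (\<integral>\<^sup>+ s. ennreal ((c/C) powr p) * indicator {a..a+d} s \<partial>lborel)"
    by (simp add: nn_integral_cmult_indicator)
  also have "\<dots> \<le> (\<integral>\<^sup>+ s \<in> {0..}. ennreal (g s powr p) \<partial>lborel)"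
  proof (rule nn_integral_mono)
    fix s
    show "ennreal ((c/C) powr p) * indicator {a..a+d} s \<le> ennreal (g s powr p) * indicator {0..} s"
    proof (cases "s \<in> {a..a+d}")
      case True
      then have "c / C \<le> g s" using h[OF True] C by (simp add: divide_le_eq mult.commute)
      then have "(c/C) powr p \<le> g s powr p" using c C p by (intro powr_mono2) auto
      then show ?thesis using True a by (auto simp: indicator_def)
    qed auto
  qed
  also have "\<dots> \<le> ennreal (B0 powr p)" by (rule I)
  finally have "ennreal ((c/C) powr p * d) \<le> ennreal (B0 powr p)"
    using d by (simp add: ennreal_mult)
  then have 1: "(c/C) powr p * d \<le> B0 powr p"
    by (simp add: ennreal_le_iff)
  have "(d powr (1/p) * (c/C)) powr p = d * (c/C) powr p"
  proof -
    have "(d powr (1/p) * (c/C)) powr p = (d powr (1/p)) powr p * (c/C) powr p"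
      by (rule powr_mult)
    also have "(d powr (1/p)) powr p = d" using d p by (simp add: powr_powr)
    finally show ?thesis .
  qed
  then have X: "(d powr (1/p) * (c/C)) powr p \<le> B0 powr p" using 1 by (simp add: mult.commute)
  have "d powr (1/p) * (c/C) \<le> B0"
    by (rule powr_cancel_le[OF p _ B0 X]) (use d c C in simp)
  then show ?thesis using C by (simp add: divide_le_eq mult.commute)
qed

lemma stab:
  fixes S :: "(real \<Rightarrow> 'q) set"
    and \<phi> :: "real \<Rightarrow> 'x::banach \<Rightarrow> (real \<Rightarrow> 'q) \<Rightarrow> 'x"
  assumes sys: "fc_dyn_sys S \<phi>"
    and t1: "t1 > 0" and L: "L \<ge> 1" and p: "p > 0" and R: "R > 0" and K: "K \<ge> 0"
    and lin: "\<And>t x \<sigma>. t \<in> {0..t1} \<Longrightarrow> norm x \<le> R \<Longrightarrow> \<sigma> \<in> S \<Longrightarrow> norm (\<phi> t x \<sigma>) \<le> L * norm x"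
    and est: "\<And>x \<sigma>. norm x \<le> R \<Longrightarrow> \<sigma> \<in> S \<Longrightarrow>
        (\<integral>\<^sup>+ t \<in> {0..}. ennreal (norm (\<phi> t x \<sigma>) powr p) \<partial>lborel) \<le> ennreal ((K * norm x) powr p)"
  shows "ULES S \<phi>"
proof -
  have phi0: "\<And>x \<sigma>. \<sigma> \<in> S \<Longrightarrow> \<phi> 0 x \<sigma> = x" using sys unfolding fc_dyn_sys_def by blast
  have semi: "\<And>t \<tau> x \<sigma>. t \<ge> 0 \<Longrightarrow> \<tau> \<ge> 0 \<Longrightarrow> \<sigma> \<in> S \<Longrightarrow> \<phi> \<tau> (\<phi> t x \<sigma>) (tshift t \<sigma>) = \<phi> (t + \<tau>) x \<sigma>"
    using sys unfolding fc_dyn_sys_def by blast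
  have shS: "\<And>\<tau> \<sigma>. \<sigma> \<in> S \<Longrightarrow> \<tau> \<ge> 0 \<Longrightarrow> tshift \<tau> \<sigma> \<in> S"
    using sys unfolding fc_dyn_sys_def shift_closed_def by blast
  have split: "\<And>t s x \<sigma>. 0 \<le> s \<Longrightarrow> s \<le> t \<Longrightarrow> \<sigma> \<in> S \<Longrightarrow> \<phi> t x \<sigma> = \<phi> (t - s) (\<phi> s x \<sigma>) (tshift s \<sigma>)"
    using semi by fastforce
  have B2: "norm (\<phi> t y \<sigma>) \<le> L\<^sup>2 * norm y" if "norm y \<le> R / L" "0 \<le> t" "t \<le> 2 * t1" "\<sigma> \<in> S" for t y \<sigma>
  proof -
    have "R / L \<le> R" using L R by (simp add: divide_le_eq)
    then have yR: "norm y \<le> R" using that(1) by linarith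
    have LL: "L * norm y \<le> L\<^sup>2 * norm y" using L by (simp add: power2_eq_square mult_right_mono)
    show ?thesis
    proof (cases "t \<le> t1")
      case True
      then show ?thesis using lin[of t y \<sigma>] that yR LL by auto
    next
      case False
      have e: "\<phi> t y \<sigma> = \<phi> (t - t1) (\<phi> t1 y \<sigma>) (tshift t1 \<sigma>)" using split[where s=t1 and t=t and x=y and \<sigma>=\<sigma>] False t1 that by auto
      have a: "norm (\<phi> t1 y \<sigma>) \<le> L * norm y" using lin[of t1 y \<sigma>] t1 yR that by auto
      also have "\<dots> \<le> R" using that(1) L by (simp add: le_divide_eq mult.commute)
      finally have "norm (\<phi> (t - t1) (\<phi> t1 y \<sigma>) (tshift t1 \<sigma>)) \<le> L * norm (\<phi> t1 y \<sigma>)"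
        using lin[of "t - t1" "\<phi> t1 y \<sigma>" "tshift t1 \<sigma>"] False that shS t1 by auto
      also have "\<dots> \<le> L * (L * norm y)" using a L by (simp add: mult_left_mono)
      finally show ?thesis using e by (simp add: power2_eq_square)
    qed
  qed
  define M where "M = max (L\<^sup>2) (L\<^sup>2 * K / t1 powr (1/p))"
  have L2: "L\<^sup>2 \<ge> 1" using L by (simp add: one_le_power)
  have M1: "M \<ge> L\<^sup>2" unfolding M_def by simp
  have MgeL: "M \<ge> L" using L M1 by (smt (verit) power2_eq_square mult_le_cancel_left1)
  have Mpos: "M \<ge> 1" using M1 L2 by linarith
  define \<rho>1 where "\<rho>1 = R / (L * M)"
  have \<rho>1pos: "\<rho>1 > 0" unfolding \<rho>1_def using R L Mpos by simp
  have \<rho>1L: "\<rho>1 \<le> R / L" unfolding \<rho>1_def using R L Mpos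
    by (simp add: divide_le_eq field_simps)
  have RL: "R / L \<le> R" using L R by (simp add: divide_le_eq)
  have M\<rho>1: "M * \<rho>1 \<le> R / L" unfolding \<rho>1_def using L Mpos by simp
  have U: "\<forall>t x \<sigma>. 0 \<le> t \<longrightarrow> t \<le> real n * t1 \<longrightarrow> norm x \<le> \<rho>1 \<longrightarrow> \<sigma> \<in> S \<longrightarrow> norm (\<phi> t x \<sigma>) \<le> M * norm x" for n :: nat
  proof (induction n)
    case 0
    then show ?case using phi0 Mpos by (simp add: mult_le_cancel_right1)
  next
    case (Suc n)
    show ?case
    proof (intro allI impI)
      fix t :: real and x :: 'x and \<sigma> assume t0: "0 \<le> t" and tn: "t \<le> real (Suc n) * t1" and x: "norm x \<le> \<rho>1" and \<sigma>: "\<sigma> \<in> S"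
      have xRL: "norm x \<le> R / L" using x \<rho>1L by linarith
      show "norm (\<phi> t x \<sigma>) \<le> M * norm x"
      proof (cases "t \<le> real n * t1")
        case True then show ?thesis using Suc.IH t0 x \<sigma> by blast
      next
        case tn': False
        show ?thesis
        proof (cases "t \<le> 2 * t1")
          case True
          then have "norm (\<phi> t x \<sigma>) \<le> L\<^sup>2 * norm x" using B2 xRL t0 \<sigma> by blast
          also have "\<dots> \<le> M * norm x" using M1 by (simp add: mult_right_mono)
          finally show ?thesis .
        next
          case False
          have key: "t1 powr (1/p) * norm (\<phi> t x \<sigma>) \<le> L\<^sup>2 * (K * norm x)"
          proof (rule int_lower[where g="\<lambda>s. norm (\<phi> s x \<sigma>)", OF p _ _ _ _ _ _ _ est])
            show "0 \<le> t - 2 * t1" using False by simp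
            show "0 \<le> t1" using t1 by simp
            show "0 < L\<^sup>2" using L by simp
            show "0 \<le> K * norm x" using K by simp
            show "norm x \<le> R" using xRL RL by linarith
            show "\<sigma> \<in> S" by (rule \<sigma>)
            show "0 \<le> norm (\<phi> t x \<sigma>)" by simp
            show "0 \<le> norm (\<phi> s x \<sigma>)" for s by simp
            fix s assume s: "s \<in> {t - 2 * t1..t - 2 * t1 + t1}"
            have s0: "0 \<le> s" "s \<le> t" "s \<le> real n * t1" using s False tn t1 by (auto simp: algebra_simps)
            have ps: "norm (\<phi> s x \<sigma>) \<le> M * norm x" using Suc.IH s0 x \<sigma> by blast
            also have "\<dots> \<le> M * \<rho>1" using x Mpos by (simp add: mult_left_mono)
            finally have psR: "norm (\<phi> s x \<sigma>) \<le> R / L" using M\<rho>1 by linarith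
            have "\<phi> t x \<sigma> = \<phi> (t - s) (\<phi> s x \<sigma>) (tshift s \<sigma>)" using split s0 \<sigma> by blast
            moreover have "norm (\<phi> (t - s) (\<phi> s x \<sigma>) (tshift s \<sigma>)) \<le> L\<^sup>2 * norm (\<phi> s x \<sigma>)"
              using B2[OF psR] s shS[OF \<sigma> s0(1)] by auto
            ultimately show "norm (\<phi> t x \<sigma>) \<le> L\<^sup>2 * norm (\<phi> s x \<sigma>)" by simp
          qed
          have tp: "t1 powr (1/p) > 0" using t1 by simp
          have "norm (\<phi> t x \<sigma>) \<le> L\<^sup>2 * K / t1 powr (1/p) * norm x"
            using key tp by (simp add: field_simps)
          also have "\<dots> \<le> M * norm x" unfolding M_def by (intro mult_right_mono) auto
          finally show ?thesis .
        qed
      qed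
    qed
  qed
  have U': "norm (\<phi> t x \<sigma>) \<le> M * norm x" if "0 \<le> t" "norm x \<le> \<rho>1" "\<sigma> \<in> S" for t x \<sigma>
  proof -
    have "0 \<le> t / t1" using t1 that by simp
    then have c0: "0 \<le> \<lceil>t / t1\<rceil>" by simp
    have "t = (t / t1) * t1" using t1 by simp
    also have "\<dots> \<le> of_int \<lceil>t / t1\<rceil> * t1" using t1 by (intro mult_right_mono) auto
    also have "\<dots> = real (nat \<lceil>t / t1\<rceil>) * t1" using c0 by simp
    finally have "t \<le> real (nat \<lceil>t / t1\<rceil>) * t1" .
    then show ?thesis using U that by blast
  qed
  define \<rho>2 where "\<rho>2 = \<rho>1 / M"
  have \<rho>2pos: "\<rho>2 > 0" unfolding \<rho>2_def using \<rho>1pos Mpos by simp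
  have \<rho>21: "\<rho>2 \<le> \<rho>1" unfolding \<rho>2_def using \<rho>1pos Mpos by (simp add: divide_le_eq)
  have M\<rho>2: "M * \<rho>2 = \<rho>1" unfolding \<rho>2_def using Mpos by simp
  have \<rho>1R: "\<rho>1 \<le> R" using \<rho>1L RL by linarith
  have D: "t powr (1/p) * norm (\<phi> t x \<sigma>) \<le> M * (K * norm x)" if x: "norm x \<le> \<rho>2" and t: "0 \<le> t" and \<sigma>: "\<sigma> \<in> S" for t x \<sigma>
  proof (rule int_lower[where g="\<lambda>s. norm (\<phi> s x \<sigma>)" and a=0 and d=t, OF p _ _ _ _ _ _ _ est])
    show "0 \<le> (0::real)" by simp
    show "0 \<le> t" by (rule t)
    show "0 \<le> norm (\<phi> t x \<sigma>)" by simp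
    show "0 < M" using Mpos by simp
    show "0 \<le> K * norm x" using K by simp
    show "norm x \<le> R" using x \<rho>21 \<rho>1R by linarith
    show "\<sigma> \<in> S" by (rule \<sigma>)
    show "0 \<le> norm (\<phi> s x \<sigma>)" for s by simp
    fix s assume s: "s \<in> {0..0 + t}"
    then have s0: "0 \<le> s" "s \<le> t" by auto
    have "norm (\<phi> s x \<sigma>) \<le> M * norm x" using U' s0 x \<rho>21 \<sigma> by force
    also have "\<dots> \<le> M * \<rho>2" using x Mpos by (simp add: mult_left_mono)
    finally have ps: "norm (\<phi> s x \<sigma>) \<le> \<rho>1" using M\<rho>2 by simp
    have "\<phi> t x \<sigma> = \<phi> (t - s) (\<phi> s x \<sigma>) (tshift s \<sigma>)" using split s0 \<sigma> by blast
    moreover have "norm (\<phi> (t - s) (\<phi> s x \<sigma>) (tshift s \<sigma>)) \<le> M * norm (\<phi> s x \<sigma>)"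
      using U' ps s0 shS[OF \<sigma> s0(1)] by auto
    ultimately show "norm (\<phi> t x \<sigma>) \<le> M * norm (\<phi> s x \<sigma>)" by simp
  qed
  define T where "T = (2 * M * K + 1) powr p"
  have MK: "M * K \<ge> 0" using Mpos K by simp
  have Tpos: "T > 0" unfolding T_def using MK by simp
  have Tp: "T powr (1/p) = 2 * M * K + 1" unfolding T_def using MK p by (simp add: powr_powr)
  have half: "2 * norm (\<phi> T x \<sigma>) \<le> norm x" if x: "norm x \<le> \<rho>2" and \<sigma>: "\<sigma> \<in> S" for x \<sigma>
  proof -
    have A: "(2 * M * K + 1) * norm (\<phi> T x \<sigma>) \<le> M * K * norm x"
      using D[OF x _ \<sigma>, of T] Tpos Tp by (simp add: mult.assoc)
    have "(2 * M * K + 1) * (2 * norm (\<phi> T x \<sigma>)) = 2 * ((2 * M * K + 1) * norm (\<phi> T x \<sigma>))"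
      by (simp add: algebra_simps)
    also have "\<dots> \<le> 2 * (M * K * norm x)" using A by simp
    also have "\<dots> \<le> (2 * M * K + 1) * norm x" by (simp add: algebra_simps)
    finally have B: "(2 * M * K + 1) * (2 * norm (\<phi> T x \<sigma>)) \<le> (2 * M * K + 1) * norm x" .
    have "0 < 2 * M * K + 1" using MK by simp
    then show ?thesis using B mult_le_cancel_left_pos by blast
  qed
  have H: "\<forall>x \<sigma>. norm x \<le> \<rho>2 \<longrightarrow> \<sigma> \<in> S \<longrightarrow> norm (\<phi> (real n * T) x \<sigma>) \<le> (1/2)^n * norm x" for n :: nat
  proof (induction n)
    case 0 then show ?case using phi0 by simp
  next
    case (Suc n)
    show ?case
    proof (intro allI impI)
      fix x :: 'x and \<sigma> assume x: "norm x \<le> \<rho>2" and \<sigma>: "\<sigma> \<in> S"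
      have e: "\<phi> (real (Suc n) * T) x \<sigma> = \<phi> (real n * T) (\<phi> T x \<sigma>) (tshift T \<sigma>)"
        using semi[of T "real n * T" \<sigma> x] Tpos \<sigma> by (simp add: algebra_simps)
      have h: "2 * norm (\<phi> T x \<sigma>) \<le> norm x" using half x \<sigma> by blast
      then have "norm (\<phi> T x \<sigma>) \<le> \<rho>2" using x norm_ge_zero[of "\<phi> T x \<sigma>"] by linarith
      then have "norm (\<phi> (real n * T) (\<phi> T x \<sigma>) (tshift T \<sigma>)) \<le> (1/2)^n * norm (\<phi> T x \<sigma>)"
        using Suc.IH shS[OF \<sigma>, of T] Tpos by simp
      also have "\<dots> \<le> (1/2)^n * (norm x / 2)" using h by (intro mult_left_mono) auto
      finally show "norm (\<phi> (real (Suc n) * T) x \<sigma>) \<le> (1/2)^Suc n * norm x" using e by simp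
    qed
  qed
  show ?thesis unfolding ULES_def
  proof (intro exI conjI allI ballI impI)
    show "\<rho>2 > 0" by (rule \<rho>2pos)
    show "2 * M > 0" using Mpos by simp
    show "ln 2 / T > 0" using Tpos by simp
    fix t :: real and x :: 'x and \<sigma>
    assume t: "0 \<le> t" and xb: "x \<in> cball 0 \<rho>2" and \<sigma>: "\<sigma> \<in> S"
    have x: "norm x \<le> \<rho>2" using xb by simp
    define n where "n = nat \<lfloor>t / T\<rfloor>"
    have tT: "0 \<le> t / T" using t Tpos by simp
    have nle: "real n \<le> t / T" unfolding n_def using tT by simp
    have ngt: "t / T < real n + 1" unfolding n_def using tT by linarith
    have nT: "real n * T \<le> t" using nle Tpos by (simp add: le_divide_eq)
    have nT0: "0 \<le> real n * T" using Tpos by simp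
    have e: "\<phi> t x \<sigma> = \<phi> (t - real n * T) (\<phi> (real n * T) x \<sigma>) (tshift (real n * T) \<sigma>)"
      using split nT nT0 \<sigma> by blast
    have y: "norm (\<phi> (real n * T) x \<sigma>) \<le> (1/2)^n * norm x" using H x \<sigma> by blast
    also have "\<dots> \<le> norm x" by (simp add: mult_left_le_one_le power_le_one)
    finally have yr: "norm (\<phi> (real n * T) x \<sigma>) \<le> \<rho>1" using x \<rho>21 by linarith
    have "norm (\<phi> t x \<sigma>) \<le> M * norm (\<phi> (real n * T) x \<sigma>)"
      using e U'[OF _ yr shS[OF \<sigma> nT0], of "t - real n * T"] nT by simp
    also have "\<dots> \<le> M * ((1/2)^n * norm x)" using y Mpos by (intro mult_left_mono) auto
    also have "(1/2::real)^n \<le> 2 * exp (- (ln 2 / T) * t)"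
    proof -
      have a: "(1/2::real)^n = exp (- (real n * ln 2))"
        by (simp add: exp_minus exp_of_nat_mult power_one_over inverse_eq_divide)
      have "t / T - 1 \<le> real n" using ngt by simp
      then have "(t / T - 1) * ln 2 \<le> real n * ln 2" by (intro mult_right_mono) auto
      then have "- (real n * ln 2) \<le> ln 2 + (- (ln 2 / T) * t)" by (simp add: algebra_simps)
      then have "exp (- (real n * ln 2)) \<le> exp (ln 2 + (- (ln 2 / T) * t))" by simp
      also have "\<dots> = 2 * exp (- (ln 2 / T) * t)" by (simp only: exp_add exp_ln_iff) simp
      finally show ?thesis using a by simp
    qed
    then have "M * ((1/2)^n * norm x) \<le> M * ((2 * exp (- (ln 2 / T) * t)) * norm x)"
      using Mpos by (intro mult_left_mono mult_right_mono) auto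
    finally show "norm (\<phi> t x \<sigma>) \<le> 2 * M * exp (- (ln 2 / T) * t) * norm x" by (simp add: mult_ac)
  qed
qed
lemma beta_linear:
  assumes beta: "class_Kinf \<beta>"
    and beta_lim: "Limsup (at_right 0) (\<lambda>r. ereal (\<beta> r / r)) < \<infinity>"
    and R: "R > 0"
  shows "\<exists>C\<ge>0. \<forall>r\<in>{0..R}. \<beta> r \<le> C * r"
proof -
  have sm: "strict_mono_on {0..} \<beta>" and b0: "\<beta> 0 = 0" using beta unfolding class_Kinf_def class_K_def by auto
  have mono: "\<beta> r \<le> \<beta> s" if "0 \<le> r" "r \<le> s" for r s
  proof (cases "r = s")
    case False
    then have "r < s" using that by simp
    then have "\<beta> r < \<beta> s" using sm that unfolding strict_mono_on_def by (meson atLeast_iff order_trans)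
    then show ?thesis by simp
  qed simp
  obtain n :: nat where n: "Limsup (at_right 0) (\<lambda>r. ereal (\<beta> r / r)) < ereal (real n)"
    using beta_lim less_PInf_Ex_of_nat by (metis less_irrefl)
  have "eventually (\<lambda>r. ereal (\<beta> r / r) < ereal (real n)) (at_right 0)"
    using Limsup_lessD[OF n] .
  then obtain b :: real where b: "b > 0" and hb: "\<And>y. y > 0 \<Longrightarrow> y < b \<Longrightarrow> \<beta> y / y < real n"
    unfolding eventually_at_right_field by auto
  have bR0: "\<beta> R \<ge> 0" using mono[of 0 R] R b0 by simp
  define C where "C = max (real n) (\<beta> R / b)"
  have C0: "C \<ge> 0" unfolding C_def by simp
  show ?thesis
  proof (intro exI[of _ C] conjI C0 ballI)
    fix r assume r: "r \<in> {0..R}"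
    show "\<beta> r \<le> C * r"
    proof (cases "r = 0")
      case True then show ?thesis using b0 by simp
    next
      case False
      then have rp: "r > 0" using r by simp
      show ?thesis
      proof (cases "r < b")
        case True
        then have "\<beta> r / r < real n" using hb rp by simp
        then have "\<beta> r < real n * r" using rp by (simp add: divide_less_eq)
        also have "\<dots> \<le> C * r" unfolding C_def using rp by (intro mult_right_mono) auto
        finally show ?thesis by simp
      next
        case False
        have "\<beta> r \<le> \<beta> R" using mono r by simp
        also have "\<dots> = (\<beta> R / b) * b" using b by simp
        also have "\<dots> \<le> (\<beta> R / b) * r" using False bR0 b by (intro mult_left_mono) auto
        also have "\<dots> \<le> C * r" unfolding C_def using rp by (intro mult_right_mono) auto
        finally show ?thesis .
      qed
    qed
  qed
qed

lemma ules_int: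
  fixes S :: "(real \<Rightarrow> 'q) set"
    and \<phi> :: "real \<Rightarrow> 'x::banach \<Rightarrow> (real \<Rightarrow> 'q) \<Rightarrow> 'x"
  assumes U: "ULES S \<phi>" and p: "p > 0"
  shows "\<exists>k R. nondecr_nonneg k \<and> R > 0 \<and> int_estimate S \<phi> p k R"
proof -
  obtain R M lam where R: "R > 0" and M: "M > 0" and lam: "lam > 0"
    and h: "\<And>t x \<sigma>. t \<ge> 0 \<Longrightarrow> x \<in> cball 0 R \<Longrightarrow> \<sigma> \<in> S \<Longrightarrow> norm (\<phi> t x \<sigma>) \<le> M * exp (- lam * t) * norm x"
    using U unfolding ULES_def by blast
  define c where "c = (M powr p / (lam * p)) powr (1/p)"
  have cp: "c powr p = M powr p / (lam * p)" unfolding c_def using p lam M by (simp add: powr_powr)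
  show ?thesis
  proof (intro exI conjI)
    show "nondecr_nonneg (\<lambda>_. c)" unfolding nondecr_nonneg_def c_def by (simp add: mono_on_def)
    show "R > 0" by (rule R)
    show "int_estimate S \<phi> p (\<lambda>_. c) R" unfolding int_estimate_def
    proof (intro ballI)
      fix x \<sigma> assume x: "x \<in> cball (0::'x) R" and \<sigma>: "\<sigma> \<in> S"
      have "(\<integral>\<^sup>+ t \<in> {0..}. ennreal (norm (\<phi> t x \<sigma>) powr p) \<partial>lborel)
          \<le> (\<integral>\<^sup>+ t. ennreal (M powr p * norm x powr p) * (ennreal (exp (- (lam * p) * t)) * indicator {0..} t) \<partial>lborel)"
      proof (rule nn_integral_mono)
        fix t :: real
        show "ennreal (norm (\<phi> t x \<sigma>) powr p) * indicator {0..} t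
          \<le> ennreal (M powr p * norm x powr p) * (ennreal (exp (- (lam * p) * t)) * indicator {0..} t)"
        proof (cases "t \<ge> 0")
          case True
          have "norm (\<phi> t x \<sigma>) powr p \<le> (M * exp (- lam * t) * norm x) powr p"
            using h[OF True x \<sigma>] p by (intro powr_mono2) auto
          also have "\<dots> = M powr p * norm x powr p * exp (- (lam * p) * t)"
            by (simp add: powr_mult exp_powr_real mult_ac)
          finally have "ennreal (norm (\<phi> t x \<sigma>) powr p) \<le> ennreal (M powr p * norm x powr p) * ennreal (exp (- (lam * p) * t))"
            by (simp add: ennreal_mult[symmetric])
          then show ?thesis using True by (simp add: indicator_def)
        qed simp
      qed
      also have "\<dots> = ennreal (M powr p * norm x powr p) * (\<integral>\<^sup>+ t \<in> {0..}. ennreal (exp (- (lam * p) * t)) \<partial>lborel)"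
        by (rule nn_integral_cmult) measurable
      also have "\<dots> = ennreal (M powr p * norm x powr p) * ennreal (1 / (lam * p))"
        using exp_int[of "lam * p"] lam p by simp
      also have "\<dots> = ennreal (c powr p * norm x powr p)"
      proof -
        have "M powr p * norm x powr p * (1 / (lam * p)) = c powr p * norm x powr p" using cp by simp
        moreover have "ennreal (M powr p * norm x powr p) * ennreal (1 / (lam * p)) = ennreal (M powr p * norm x powr p * (1 / (lam * p)))"
          using lam p by (intro ennreal_mult[symmetric]) auto
        ultimately show ?thesis by simp
      qed
      finally show "(\<integral>\<^sup>+ t \<in> {0..}. ennreal (norm (\<phi> t x \<sigma>) powr p) \<partial>lborel) \<le> ennreal (c powr p * norm x powr p)" .
    qed
  qed
qed
theorem theorem1:
  fixes S :: "(real \<Rightarrow> 'q) set"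
    and \<phi> :: "real \<Rightarrow> 'x::banach \<Rightarrow> (real \<Rightarrow> 'q) \<Rightarrow> 'x"
    and t1 G0 :: real and \<beta> :: "real \<Rightarrow> real"
  assumes sys: "fc_dyn_sys S \<phi>"
    and t1: "t1 > 0" and G0: "G0 > 0"
    and beta: "class_Kinf \<beta>"
    and beta_lim: "Limsup (at_right 0) (\<lambda>r. ereal (\<beta> r / r)) < \<infinity>"
    and bound: "\<And>t x \<sigma>. t \<in> {0..t1} \<Longrightarrow> \<sigma> \<in> S \<Longrightarrow> norm (\<phi> t x \<sigma>) \<le> G0 * \<beta> (norm x)"
  shows "(ULES S \<phi> \<longrightarrow>
           (\<forall>p>0. \<exists>k R. nondecr_nonneg k \<and> R > 0 \<and> int_estimate S \<phi> p k R))
       \<and> ((\<forall>p>0. \<exists>k R. nondecr_nonneg k \<and> R > 0 \<and> int_estimate S \<phi> p k R) \<longrightarrow>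
           (\<exists>p>0. \<exists>k R. nondecr_nonneg k \<and> R > 0 \<and> int_estimate S \<phi> p k R))
       \<and> ((\<exists>p>0. \<exists>k R. nondecr_nonneg k \<and> R > 0 \<and> int_estimate S \<phi> p k R) \<longrightarrow> ULES S \<phi>)"
proof (intro conjI impI)
  assume "ULES S \<phi>"
  then show "\<forall>p>0. \<exists>k R. nondecr_nonneg k \<and> R > 0 \<and> int_estimate S \<phi> p k R"
    using ules_int by blast
next
  assume "\<forall>p>0. \<exists>k R. nondecr_nonneg k \<and> R > 0 \<and> int_estimate S \<phi> p k R"
  then show "\<exists>p>0. \<exists>k R. nondecr_nonneg k \<and> R > 0 \<and> int_estimate S \<phi> p k R"
    by (meson zero_less_one)
next
  assume "\<exists>p>0. \<exists>k R. nondecr_nonneg k \<and> R > 0 \<and> int_estimate S \<phi> p k R"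
  then obtain p k R where p: "p > 0" and k: "nondecr_nonneg k" and R: "R > 0"
    and ie: "int_estimate S \<phi> p k R" by blast
  obtain C where C: "C \<ge> 0" and hC: "\<And>r. r \<in> {0..R} \<Longrightarrow> \<beta> r \<le> C * r"
    using beta_linear[OF beta beta_lim R] by blast
  define L where "L = max 1 (G0 * C)"
  have L: "L \<ge> 1" unfolding L_def by simp
  have lin: "norm (\<phi> t x \<sigma>) \<le> L * norm x" if "t \<in> {0..t1}" "norm x \<le> R" "\<sigma> \<in> S" for t x \<sigma>
  proof -
    have "norm (\<phi> t x \<sigma>) \<le> G0 * \<beta> (norm x)" using bound that by blast
    also have "\<dots> \<le> G0 * (C * norm x)" using hC[of "norm x"] that G0 by (intro mult_left_mono) auto
    also have "\<dots> \<le> L * norm x" unfolding L_def by (simp add: mult.assoc[symmetric] mult_right_mono)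
    finally show ?thesis .
  qed
  define K where "K = k R"
  have K: "K \<ge> 0" unfolding K_def using k R unfolding nondecr_nonneg_def by simp
  have est: "(\<integral>\<^sup>+ t \<in> {0..}. ennreal (norm (\<phi> t x \<sigma>) powr p) \<partial>lborel) \<le> ennreal ((K * norm x) powr p)"
    if x: "norm x \<le> R" and \<sigma>: "\<sigma> \<in> S" for x \<sigma>
  proof -
    have "(\<integral>\<^sup>+ t \<in> {0..}. ennreal (norm (\<phi> t x \<sigma>) powr p) \<partial>lborel) \<le> ennreal (k (norm x) powr p * norm x powr p)"
      using ie x \<sigma> unfolding int_estimate_def by simp
    also have "\<dots> \<le> ennreal ((K * norm x) powr p)"
    proof (rule ennreal_leI)
      have k0: "k (norm x) \<ge> 0" using k unfolding nondecr_nonneg_def by simp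
      have "k (norm x) \<le> K" unfolding K_def using k x R unfolding nondecr_nonneg_def mono_on_def by simp
      then have "k (norm x) powr p \<le> K powr p" using k0 p by (intro powr_mono2) auto
      then have "k (norm x) powr p * norm x powr p \<le> K powr p * norm x powr p" by (intro mult_right_mono) auto
      also have "\<dots> = (K * norm x) powr p" by (simp add: powr_mult)
      finally show "k (norm x) powr p * norm x powr p \<le> (K * norm x) powr p" .
    qed
    finally show ?thesis .
  qed
  show "ULES S \<phi>"
    by (rule stab[OF sys t1 L p R K lin est])
qed

end
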